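(* For every $q\in X^*\setminus\{e\}$: $Q_q=P_q^*\cdot q\cup\{e\}\subseteq P_q^*$, and $\mathrm{pref}(P_q^* )=\mathrm{pref}(Q_q)=P_q^*\cdot\mathrm{pref}(q)$.
   Context: $X$ is a finite alphabet with $|X|\ge 2$; $X^*$ the finite words (empty word $e$). $w\sqsubseteq\eta$ means $w$ is a prefix of $\eta$, $w\sqsubset\eta$ a proper prefix. For languages $L$, $L^*=\bigcup_{i\in\mathbb{N}}L^i$; concatenation extends to sets. $\mathrm{pref}(B)$ is the set of finite prefixes of elements of $B$. A word $\eta$ is quasiperiodic with quasiperiod $q\in X^*\setminus\{e\}$ if for every natural number $j<|\eta|$ there is a prefix $u_j\sqsubseteq\eta$ with $j-|q|<|u_j|\le j$ and $u_j\cdot q\sqsubseteq\eta$. $Q_q$ is the set of finite words quasiperiodic with quasiperiod $q$ (including $e$). $P_q:=\{v: e\sqsubset v\sqsubseteq q\sqsubset v\cdot q\}$. *)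

theory Defs
  imports Main "HOL-Library.Sublist" "HOL-Library.Cardinality"
begin

text \<open>Finite words over the alphabet 'a are lists; the empty word e is [].
  prefix w eta is the prefix relation, strict_prefix the proper prefix relation.\<close>

definition conc :: "'a list set \<Rightarrow> 'a list set \<Rightarrow> 'a list set" where
  "conc A B = {u @ v | u v. u \<in> A \<and> v \<in> B}"

fun lpow :: "'a list set \<Rightarrow> nat \<Rightarrow> 'a list set" where
  "lpow A 0 = {[]}"
| "lpow A (Suc n) = conc A (lpow A n)"

definition lstar :: "'a list set \<Rightarrow> 'a list set" where
  "lstar A = (\<Union>i. lpow A i)"

definition pref :: "'a list set \<Rightarrow> 'a list set" where
  "pref B = {w. \<exists>eta\<in>B. prefix w eta}"

definition quasiperiodic :: "'a list \<Rightarrow> 'a list \<Rightarrow> bool" where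
  "quasiperiodic eta q \<longleftrightarrow> q \<noteq> [] \<and>
     (\<forall>j::nat. j < length eta \<longrightarrow>
        (\<exists>u. prefix u eta \<and> int j - int (length q) < int (length u) \<and> length u \<le> j
             \<and> prefix (u @ q) eta))"

definition Qset :: "'a list \<Rightarrow> 'a list set" where
  "Qset q = {eta. quasiperiodic eta q}"

definition Pset :: "'a list \<Rightarrow> 'a list set" where
  "Pset q = {v. strict_prefix [] v \<and> prefix v q \<and> strict_prefix q (v @ q)}"

end

theory Submission
  imports Defs
begin

lemma lpow_app: "x \<in> lpow A n \<Longrightarrow> y \<in> lpow A m \<Longrightarrow> x @ y \<in> lpow A (n + m)"
proof (induction n arbitrary: x)
  case 0 then show ?case by simp
next
  case (Suc n)
  from Suc.prems(1) obtain a z where "x = a @ z" "a \<in> A" "z \<in> lpow A n" by (auto simp: conc_def)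
  with Suc.IH[of z] Suc.prems show ?case by (auto simp: conc_def)
qed

lemma lstar_app: "x \<in> lstar A \<Longrightarrow> y \<in> lstar A \<Longrightarrow> x @ y \<in> lstar A"
proof -
  assume "x \<in> lstar A" "y \<in> lstar A"
  then obtain n m where "x \<in> lpow A n" "y \<in> lpow A m" unfolding lstar_def by blast
  then have "x @ y \<in> lpow A (n + m)" by (rule lpow_app)
  then show ?thesis unfolding lstar_def by blast
qed

lemma lstar_single: "a \<in> A \<Longrightarrow> a \<in> lstar A"
proof -
  assume "a \<in> A"
  then have "a @ [] \<in> lpow A (Suc 0)" unfolding lpow.simps conc_def by blast
  then have "a \<in> lpow A (Suc 0)" by simp
  then show ?thesis unfolding lstar_def by blast
qed

lemma lstar_nil: "[] \<in> lstar A"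
proof -
  have "[] \<in> lpow A 0" by simp
  then show ?thesis unfolding lstar_def by blast
qed

lemma lstar_cons: "a \<in> A \<Longrightarrow> x \<in> lstar A \<Longrightarrow> a @ x \<in> lstar A"
  using lstar_app lstar_single by blast

lemma Pset_iff: "v \<in> Pset q \<longleftrightarrow> v \<noteq> [] \<and> prefix v q \<and> prefix q (v @ q)"
proof -
  have "strict_prefix q (v @ q) \<longleftrightarrow> v \<noteq> [] \<and> prefix q (v @ q)" if "v \<noteq> []"
    using that by (auto simp: strict_prefix_def)
  moreover have "strict_prefix [] v \<longleftrightarrow> v \<noteq> []" by (auto simp: strict_prefix_def)
  ultimately show ?thesis unfolding Pset_def by auto
qed

lemma lpow_pref: "x \<in> lpow (Pset q) n \<Longrightarrow> prefix q (x @ q)"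
proof (induction n arbitrary: x)
  case 0 then show ?case by simp
next
  case (Suc n)
  from Suc.prems(1) obtain a z where xz: "x = a @ z" "a \<in> Pset q" "z \<in> lpow (Pset q) n" by (auto simp: conc_def)
  have "prefix q (z @ q)" using Suc.IH xz by blast
  hence "prefix (a @ q) (a @ z @ q)" by simp
  moreover have "prefix q (a @ q)" using xz Pset_iff by blast
  ultimately show ?case using xz by (metis append.assoc prefix_order.trans)
qed

lemma lpow_qp: "q \<noteq> [] \<Longrightarrow> x \<in> lpow (Pset q) n \<Longrightarrow> quasiperiodic (x @ q) q"
proof (induction n arbitrary: x)
  case 0
  then have "x = []" by simp
  then show ?case unfolding quasiperiodic_def using 0
    by (auto intro!: exI[of _ "[]"])
next
  case (Suc n)
  from Suc.prems(2) obtain a z where xz: "x = a @ z" "a \<in> Pset q" "z \<in> lpow (Pset q) n" by (auto simp: conc_def)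
  have qp: "quasiperiodic (z @ q) q" using Suc.IH[OF Suc.prems(1) xz(3)] .
  have pa: "prefix a q" "a \<noteq> []" "prefix q (a @ q)" using xz Pset_iff by auto
  have la: "length a \<le> length q" using pa prefix_length_le by blast
  have "prefix q (z @ q)" using lpow_pref xz by blast
  hence "prefix (a @ q) (a @ z @ q)" by simp
  hence pq: "prefix q (a @ z @ q)" using pa by (metis prefix_order.trans)
  show ?case unfolding quasiperiodic_def
  proof (intro conjI allI impI)
    show "q \<noteq> []" by fact
    fix j assume j: "j < length (x @ q)"
    show "\<exists>u. prefix u (x @ q) \<and> int j - int (length q) < int (length u) \<and> length u \<le> j \<and> prefix (u @ q) (x @ q)"
    proof (cases "j < length a")
      case True
      have "prefix [] (x @ q)" by simp
      moreover have "int j - int (length q) < int (length ([]::'a list))" using True la by simp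
      moreover have "prefix ([] @ q) (x @ q)" using pq xz by simp
      ultimately show ?thesis by (intro exI[of _ "[]"]) simp
    next
      case False
      then have "j - length a < length (z @ q)" using j xz by auto
      then obtain u where u: "prefix u (z @ q)" "int (j - length a) - int (length q) < int (length u)"
        "length u \<le> j - length a" "prefix (u @ q) (z @ q)"
        using qp unfolding quasiperiodic_def by blast
      show ?thesis
      proof (intro exI[of _ "a @ u"] conjI)
        show "prefix (a @ u) (x @ q)" using u(1) xz by simp
        show "prefix ((a @ u) @ q) (x @ q)" using u(4) xz by simp
        show "length (a @ u) \<le> j" using u(3) False by simp
        have "int (j - length a) = int j - int (length a)" using False by simp
        then show "int j - int (length q) < int (length (a @ u))" using u(2) by simp
      qed
    qed
  qed
qed

lemma qp_decomp:
  "quasiperiodic eta q \<Longrightarrow> eta \<noteq> [] \<Longrightarrow> \<exists>x\<in>lstar (Pset q). eta = x @ q"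
proof (induction "length eta" arbitrary: eta rule: less_induct)
  case less
  have qn: "q \<noteq> []" using less.prems quasiperiodic_def by blast
  have "\<exists>u. prefix u eta \<and> int 0 - int (length q) < int (length u) \<and> length u \<le> 0 \<and> prefix (u @ q) eta"
    using less.prems unfolding quasiperiodic_def by blast
  hence pq: "prefix q eta" by auto
  show ?case
  proof (cases "length eta \<le> length q")
    case True
    hence "eta = q" using pq by (auto simp: prefix_def)
    then show ?thesis using lstar_nil by fastforce
  next
    case False
    then obtain u where u: "prefix u eta" "int (length q) - int (length q) < int (length u)"
        "length u \<le> length q" "prefix (u @ q) eta"
      using less.prems unfolding quasiperiodic_def by (meson not_le)
    have un: "u \<noteq> []" using u by auto
    have "prefix u q" using u pq prefix_length_prefix by blast
    moreover have "prefix q (u @ q)" using u pq prefix_length_prefix by (metis length_append le_add2)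
    ultimately have uP: "u \<in> Pset q" using un Pset_iff by blast
    obtain e' where e': "eta = u @ e'" using u prefixE by blast
    have e'n: "e' \<noteq> []" using False e' u by auto
    have "prefix q e'" using u(4) e' by simp
    have qp': "quasiperiodic e' q" unfolding quasiperiodic_def
    proof (intro conjI allI impI)
      show "q \<noteq> []" by fact
      fix j assume j: "j < length e'"
      then have "j + length u < length eta" using e' by simp
      then obtain w where w: "prefix w eta" "int (j + length u) - int (length q) < int (length w)"
        "length w \<le> j + length u" "prefix (w @ q) eta"
        using less.prems unfolding quasiperiodic_def by blast
      show "\<exists>v. prefix v e' \<and> int j - int (length q) < int (length v) \<and> length v \<le> j \<and> prefix (v @ q) e'"
      proof (cases "length u \<le> length w")
        case True
        then have "prefix u w" using w u prefix_length_prefix by blast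
        then obtain v where v: "w = u @ v" using prefixE by blast
        show ?thesis
          apply (rule exI[of _ v])
          using w v e' True by auto
      next
        case False
        then show ?thesis using w \<open>prefix q e'\<close> by (auto intro!: exI[of _ "[]"])
      qed
    qed
    have "length e' < length eta" using e' un by simp
    then obtain x where "x \<in> lstar (Pset q)" "e' = x @ q" using less.hyps qp' e'n by blast
    then show ?thesis using e' uP lstar_cons by fastforce
  qed
qed

lemma lpow_prefix:
  "x \<in> lpow (Pset q) n \<Longrightarrow> prefix w x \<Longrightarrow> w \<in> conc (lstar (Pset q)) (pref {q})"
proof (induction n arbitrary: x w)
  case 0 then show ?case using lstar_nil by (auto simp: conc_def pref_def)
next
  case (Suc n)
  from Suc.prems(1) obtain a z where xz: "x = a @ z" "a \<in> Pset q" "z \<in> lpow (Pset q) n" by (auto simp: conc_def)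
  from Suc.prems xz have "prefix w a \<or> (\<exists>us. w = a @ us \<and> prefix us z)" by (simp add: prefix_append)
  then show ?case
  proof
    assume "prefix w a"
    then have "prefix w q" using xz Pset_iff prefix_order.trans by blast
    then show ?thesis unfolding conc_def pref_def using lstar_nil by force
  next
    assume "\<exists>us. w = a @ us \<and> prefix us z"
    then obtain us where us: "w = a @ us" "prefix us z" by blast
    then have "us \<in> conc (lstar (Pset q)) (pref {q})" using Suc.IH xz by blast
    then obtain y r where "us = y @ r" "y \<in> lstar (Pset q)" "r \<in> pref {q}" by (auto simp: conc_def)
    then show ?thesis unfolding conc_def using us xz lstar_cons[of a "Pset q" y]
      by (intro CollectI exI[of _ "a @ y"] exI[of _ r]) auto
  qed
qed

lemma lstar_prefix:
  "x \<in> lstar (Pset q) \<Longrightarrow> prefix w x \<Longrightarrow> w \<in> conc (lstar (Pset q)) (pref {q})"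
proof -
  assume "x \<in> lstar (Pset q)" "prefix w x"
  then obtain n where "x \<in> lpow (Pset q) n" unfolding lstar_def by blast
  then show ?thesis using lpow_prefix \<open>prefix w x\<close> by blast
qed

theorem proposition1:
  fixes q :: "'a::finite list"
  assumes "CARD('a) \<ge> 2"
    and "q \<noteq> []"
  shows "Qset q = conc (lstar (Pset q)) {q} \<union> {[]}
     \<and> conc (lstar (Pset q)) {q} \<union> {[]} \<subseteq> lstar (Pset q)
     \<and> pref (lstar (Pset q)) = pref (Qset q)
     \<and> pref (Qset q) = conc (lstar (Pset q)) (pref {q})"
proof -
  have qP: "q \<in> Pset q" using assms(2) Pset_iff by (metis prefix_order.refl prefix_prefix)
  have A: "Qset q = conc (lstar (Pset q)) {q} \<union> {[]}"
  proof
    show "Qset q \<subseteq> conc (lstar (Pset q)) {q} \<union> {[]}"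
      using qp_decomp unfolding Qset_def conc_def by fastforce
    show "conc (lstar (Pset q)) {q} \<union> {[]} \<subseteq> Qset q"
    proof
      fix w assume "w \<in> conc (lstar (Pset q)) {q} \<union> {[]}"
      then show "w \<in> Qset q"
      proof
        assume "w \<in> conc (lstar (Pset q)) {q}"
        then obtain x n where "w = x @ q" "x \<in> lpow (Pset q) n"
          unfolding conc_def lstar_def by auto
        then show ?thesis using lpow_qp assms(2) unfolding Qset_def by blast
      next
        assume "w \<in> {[]}"
        then show ?thesis using assms(2) unfolding Qset_def quasiperiodic_def by auto
      qed
    qed
  qed
  have B: "conc (lstar (Pset q)) {q} \<union> {[]} \<subseteq> lstar (Pset q)"
    using lstar_app lstar_single[OF qP] lstar_nil unfolding conc_def by blast
  have C1: "pref (lstar (Pset q)) \<subseteq> conc (lstar (Pset q)) (pref {q})"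
    using lstar_prefix unfolding pref_def by blast
  have C2: "conc (lstar (Pset q)) (pref {q}) \<subseteq> pref (Qset q)"
  proof
    fix w assume "w \<in> conc (lstar (Pset q)) (pref {q})"
    then obtain x r where xr: "w = x @ r" "x \<in> lstar (Pset q)" "prefix r q"
      unfolding conc_def pref_def by auto
    then have "x @ q \<in> Qset q" using A unfolding conc_def by blast
    moreover have "prefix w (x @ q)" using xr by simp
    ultimately show "w \<in> pref (Qset q)" unfolding pref_def by blast
  qed
  have C3: "pref (Qset q) \<subseteq> pref (lstar (Pset q))"
    using A B unfolding pref_def by blast
  show ?thesis using A B C1 C2 C3 by blast
qed

end
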